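(* Consider the Bellman problem: find $v\in\mathbb{R}^M$ with $\sup_{P\in\mathcal{P}}\{-A(P)v+b(P)\}=0$. Assume (H0), that $A$ and $b$ are bounded on $\mathcal{P}$, and that $A(P)$ is a monotone matrix for every $P\in\mathcal{P}$. Then for any $v^0\in\mathbb{R}^M$ and any positive summable sequence $(\epsilon^\ell)$, the sequence $(v^\ell)_{\ell\ge1}$ produced by $\epsilon$-policy iteration converges to $v$, the unique solution of the Bellman problem (in particular a solution exists).
   Context: $\mathcal{P}=\prod_{i=1}^M\mathcal{P}_i$ is a product of nonempty sets; $A:\mathcal{P}\to\mathbb{R}^{M\times M}$ and $b:\mathcal{P}\to\mathbb{R}^M$ are row-decoupled: row $i$ of $A(P)$ and $[b(P)]_i$ depend only on $P_i$. Order on $\mathbb{R}^M$ and suprema are componentwise. A real square matrix $A$ is monotone if $Av\ge0$ implies $v\ge0$. (H0): $P\mapsto A(P)^{-1}$ is bounded on $\{P\in\mathcal{P}: A(P)\text{ nonsingular}\}$. For $x\in\mathbb{R}^M$ and $c\in\mathbb{R}$, $x+c$ adds $c$ to each component. $\epsilon$-policy iteration: pick a sequence $\epsilon^\ell>0$ with $\sum_{\ell\ge1}\epsilon^\ell<\infty$; for $\ell=1,2,\dots$ choose $P^\ell\in\mathcal{P}$ with $-A(P^\ell)v^{\ell-1}+b(P^\ell)+\epsilon^\ell\ge\sup_{P\in\mathcal{P}}\{-A(P)v^{\ell-1}+b(P)\}$, and let $v^\ell$ be the exact solution of $A(P^\ell)v^\ell=b(P^\ell)$. *)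

theory Defs
  imports "HOL-Analysis.Analysis"
begin

text \<open>Index set {1..M} is the finite type 'm; a policy P is a function 'm => 'c
  with P i in Ps i, i.e. an element of the product set Pi UNIV Ps.\<close>

definition monotone_matrix :: "real^'m^'m \<Rightarrow> bool" where
  "monotone_matrix A \<longleftrightarrow> (\<forall>v. (\<forall>i. 0 \<le> (A *v v) $ i) \<longrightarrow> (\<forall>i. 0 \<le> v $ i))"

definition row_decoupled ::
  "('m::finite \<Rightarrow> 'c set) \<Rightarrow> (('m \<Rightarrow> 'c) \<Rightarrow> real^'m^'m) \<Rightarrow> (('m \<Rightarrow> 'c) \<Rightarrow> real^'m) \<Rightarrow> bool" where
  "row_decoupled Ps A b \<longleftrightarrow>
     (\<forall>P\<in>Pi UNIV Ps. \<forall>Q\<in>Pi UNIV Ps. \<forall>i. P i = Q i \<longrightarrow> A P $ i = A Q $ i \<and> b P $ i = b Q $ i)"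

definition bellman_sup ::
  "('m::finite \<Rightarrow> 'c set) \<Rightarrow> (('m \<Rightarrow> 'c) \<Rightarrow> real^'m^'m) \<Rightarrow> (('m \<Rightarrow> 'c) \<Rightarrow> real^'m) \<Rightarrow> real^'m \<Rightarrow> real^'m" where
  "bellman_sup Ps A b v = (\<chi> i. SUP P\<in>Pi UNIV Ps. (b P - A P *v v) $ i)"

end

theory Submission imports Defs begin
lemma comp_bound: fixes M :: "real^'n^'m"
  shows "\<bar>(M *v x) $ i\<bar> \<le> norm M * norm x"
proof -
  have "\<bar>(M *v x) $ i\<bar> \<le> norm (M $ i) * norm x"
    by (simp add: matrix_mult_dot Cauchy_Schwarz_ineq2)
  also have "\<dots> \<le> norm M * norm x"
    by (rule mult_right_mono[OF _ norm_ge_zero]) (rule Finite_Cartesian_Product.norm_nth_le)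
  finally show ?thesis .
qed

lemma mono_inv: fixes A :: "real^'m^'m"
  assumes "monotone_matrix A"
  shows "invertible A \<and> A ** matrix_inv A = mat 1"
proof -
  have "\<forall>x. A *v x = 0 \<longrightarrow> x = 0"
  proof (intro allI impI)
    fix x assume h: "A *v x = 0"
    have "\<forall>i. 0 \<le> x $ i" using assms h unfolding monotone_matrix_def by auto
    moreover have "A *v (- x) = 0" using h by (simp add: vec_eq_iff matrix_vector_mult_def sum_negf)
    then have "\<forall>i. 0 \<le> (- x) $ i" using assms unfolding monotone_matrix_def by (metis zero_index order_refl)
    ultimately show "x = 0" by (auto simp: vec_eq_iff intro: antisym)
  qed
  then have inv: "invertible A" using invertible_left_inverse matrix_left_invertible_ker by blast
  then have "\<exists>A'. A ** A' = mat 1 \<and> A' ** A = mat 1" unfolding invertible_def by blast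
  then have "A ** matrix_inv A = mat 1 \<and> matrix_inv A ** A = mat 1"
    unfolding matrix_inv_def by (rule someI_ex)
  with inv show ?thesis by blast
qed

lemma mono_lower: fixes A Ai :: "real^'m^'m"
  assumes mono: "monotone_matrix A" and AAi: "A ** Ai = mat 1" and nB: "norm Ai \<le> B"
    and c: "c \<ge> 0" and h: "\<And>i. (A *v x) $ i \<ge> - c"
  shows "x $ j \<ge> - c * (B * norm ((\<chi> i. 1)::real^'m))"
proof -
  define one :: "real^'m" where "one = (\<chi> i. 1)"
  define y where "y = x + c *s (Ai *v one)"
  have "A *v y = A *v x + c *s ((A ** Ai) *v one)"
    unfolding y_def by (simp add: matrix_vector_right_distrib matrix_vector_mul_assoc vector_scalar_commute)
  also have "\<dots> = A *v x + c *s one" using AAi by simp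
  finally have "\<forall>i. 0 \<le> (A *v y) $ i" using h by (simp add: one_def) (smt (verit) h)
  then have "0 \<le> y $ j" using mono unfolding monotone_matrix_def by blast
  then have "x $ j \<ge> - c * (Ai *v one) $ j" unfolding y_def by simp
  moreover have "(Ai *v one) $ j \<le> B * norm one"
    using comp_bound[of Ai one j] nB by (smt (verit) mult_right_mono norm_ge_zero)
  then have "c * (Ai *v one) $ j \<le> c * (B * norm one)" using c by (rule mult_left_mono)
  ultimately show ?thesis unfolding one_def by linarith
qed

lemma almost_inc_conv: fixes a d :: "nat \<Rightarrow> real"
  assumes step: "\<And>l. a (Suc l) \<ge> a l - d l" and d: "summable d" and C: "\<And>l. \<bar>a l\<bar> \<le> C"
    and dpos: "\<And>l. d l \<ge> 0"
  shows "convergent a"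
proof -
  define g where "g l = a l + (\<Sum>k<l. d k)" for l
  have "incseq g" unfolding incseq_Suc_iff g_def using step by (simp add: algebra_simps)
  moreover have "\<forall>l. g l \<le> C + suminf d" unfolding g_def
  proof
    fix l show "a l + sum d {..<l} \<le> C + suminf d"
      using C[of l] sum_le_suminf[OF d, of "{..<l}"] dpos by force
  qed
  ultimately obtain L where L: "g \<longlonglongrightarrow> L" by (rule incseq_convergent)
  have "(\<lambda>l. g l - (\<Sum>k<l. d k)) \<longlonglongrightarrow> L - suminf d"
    by (intro tendsto_diff L summable_LIMSEQ d)
  then show ?thesis unfolding g_def convergent_def by auto
qed

theorem theoremA3:
  fixes Ps :: "'m::finite \<Rightarrow> 'c set"
    and A :: "('m \<Rightarrow> 'c) \<Rightarrow> real^'m^'m"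
    and b :: "('m \<Rightarrow> 'c) \<Rightarrow> real^'m"
    and eps :: "nat \<Rightarrow> real"
    and Pol :: "nat \<Rightarrow> ('m \<Rightarrow> 'c)"
    and v :: "nat \<Rightarrow> real^'m"
  assumes nonempty: "\<And>i. Ps i \<noteq> {}"
    and decoupled: "row_decoupled Ps A b"
    and H0: "bounded ((\<lambda>P. matrix_inv (A P)) ` {P \<in> Pi UNIV Ps. invertible (A P)})"
    and A_bdd: "bounded (A ` Pi UNIV Ps)"
    and b_bdd: "bounded (b ` Pi UNIV Ps)"
    and A_mono: "\<And>P. P \<in> Pi UNIV Ps \<Longrightarrow> monotone_matrix (A P)"
    and eps_pos: "\<And>l. eps (Suc l) > 0"
    and eps_summable: "summable (\<lambda>l. eps (Suc l))"
    and Pol_in: "\<And>l. Pol (Suc l) \<in> Pi UNIV Ps"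
    and Pol_eps: "\<And>l i. (b (Pol (Suc l)) - A (Pol (Suc l)) *v v l) $ i + eps (Suc l)
                           \<ge> bellman_sup Ps A b (v l) $ i"
    and v_solve: "\<And>l. A (Pol (Suc l)) *v v (Suc l) = b (Pol (Suc l))"
  shows "\<exists>u. (\<forall>w. bellman_sup Ps A b w = 0 \<longleftrightarrow> w = u) \<and> v \<longlonglongrightarrow> u"
proof -
  define PS where "PS = Pi UNIV Ps"
  define F where "F = bellman_sup Ps A b"
  have F_def': "F w $ i = (SUP P\<in>PS. (b P - A P *v w) $ i)" for w i
    by (simp add: F_def PS_def bellman_sup_def)
  have PS_ne: "PS \<noteq> {}"
  proof -
    have "(\<lambda>i. SOME x. x \<in> Ps i) \<in> PS" unfolding PS_def using nonempty by (auto intro: some_in_eq[THEN iffD2])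
    then show ?thesis by blast
  qed
  obtain KA where KA: "KA > 0" "\<And>P. P \<in> PS \<Longrightarrow> norm (A P) \<le> KA"
    using A_bdd unfolding bounded_pos PS_def by auto
  obtain KB where KB: "KB > 0" "\<And>P. P \<in> PS \<Longrightarrow> norm (b P) \<le> KB"
    using b_bdd unfolding bounded_pos PS_def by auto
  have inv: "\<And>P. P \<in> PS \<Longrightarrow> invertible (A P) \<and> A P ** matrix_inv (A P) = mat 1"
    using A_mono mono_inv unfolding PS_def by blast
  obtain KI where KI: "KI > 0" "\<And>P. P \<in> PS \<Longrightarrow> norm (matrix_inv (A P)) \<le> KI"
    using H0 inv unfolding bounded_pos PS_def by auto
  define one :: "real^'m" where "one = (\<chi> i. 1)"
  define K where "K = KI * norm one"
  have "one \<noteq> 0" unfolding one_def by (simp add: vec_eq_iff)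
  then have Kpos: "K > 0" unfolding K_def using KI by simp
  have lowerA: "\<And>P x c j. P \<in> PS \<Longrightarrow> c \<ge> 0 \<Longrightarrow> (\<And>i. (A P *v x) $ i \<ge> - c) \<Longrightarrow> x $ j \<ge> - c * K"
    unfolding K_def one_def
    using mono_lower A_mono inv KI unfolding PS_def by (metis mult.assoc)
  have compA: "\<And>P x i. P \<in> PS \<Longrightarrow> \<bar>(A P *v x) $ i\<bar> \<le> KA * norm x"
    using comp_bound KA by (smt (verit) mult_right_mono norm_ge_zero)
  have compb: "\<And>P i. P \<in> PS \<Longrightarrow> \<bar>b P $ i\<bar> \<le> KB"
    using KB(2) component_le_norm_cart order_trans by blast
  have bdd: "bdd_above ((\<lambda>P. (b P - A P *v w) $ i) ` PS)" for w i
  proof (rule bdd_aboveI2)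
    fix P assume "P \<in> PS"
    then show "(b P - A P *v w) $ i \<le> KB + KA * norm w"
      using compA[of P w i] compb[of P i] by simp
  qed
  have upper: "P \<in> PS \<Longrightarrow> (b P - A P *v w) $ i \<le> F w $ i" for P w i
    unfolding F_def' by (rule cSUP_upper[OF _ bdd])
  have lip: "F w $ i \<le> F w' $ i + KA * norm (w - w')" for w w' i
    unfolding F_def'[of w]
  proof (rule cSUP_least[OF PS_ne])
    fix P assume P: "P \<in> PS"
    have "(b P - A P *v w) $ i = (b P - A P *v w') $ i - (A P *v (w - w')) $ i"
      by (simp add: matrix_vector_mult_diff_distrib)
    also have "\<dots> \<le> F w' $ i + KA * norm (w - w')"
      using upper[OF P, of w' i] compA[OF P, of "w - w'" i] by simp
    finally show "(b P - A P *v w) $ i \<le> F w' $ i + KA * norm (w - w')" .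
  qed
  have PolPS: "Pol (Suc l) \<in> PS" for l using Pol_in unfolding PS_def by blast
  have sub: "F (v (Suc l)) $ i \<ge> 0" for l i
    using upper[OF PolPS[of l], of "v (Suc l)" i] v_solve[of l] by simp
  have stepv: "v (Suc (Suc l)) $ i \<ge> v (Suc l) $ i - K * eps (Suc (Suc l))" for l i
  proof -
    let ?Q = "Pol (Suc (Suc l))"
    have "(A ?Q *v (v (Suc (Suc l)) - v (Suc l))) $ j \<ge> - eps (Suc (Suc l))" for j
      using Pol_eps[folded F_def, of "Suc l" j] sub[of l j] v_solve[of "Suc l"]
      by (simp add: matrix_vector_mult_diff_distrib)
    then have "(v (Suc (Suc l)) - v (Suc l)) $ i \<ge> - eps (Suc (Suc l)) * K"
      by (rule lowerA[OF PolPS[of "Suc l"] less_imp_le[OF eps_pos[of "Suc l"]]])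
    then show ?thesis by (simp add: algebra_simps)
  qed
  have vbdd: "\<bar>v (Suc l) $ i\<bar> \<le> KI * KB" for l i
  proof -
    let ?Q = "Pol (Suc l)"
    have "matrix_inv (A ?Q) ** A ?Q = mat 1"
      using inv[OF PolPS[of l]] matrix_left_right_inverse by blast
    then have "v (Suc l) = matrix_inv (A ?Q) *v b ?Q"
      using v_solve[of l] by (metis matrix_vector_mul_assoc matrix_vector_mul_lid)
    then have "\<bar>v (Suc l) $ i\<bar> \<le> norm (matrix_inv (A ?Q)) * norm (b ?Q)"
      using comp_bound by metis
    also have "\<dots> \<le> KI * KB"
      using KI(2)[OF PolPS[of l]] KB(2)[OF PolPS[of l]] KI(1) by (intro mult_mono) auto
    finally show ?thesis .
  qed
  have sum2: "summable (\<lambda>l. eps (Suc (Suc l)))"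
    using eps_summable summable_Suc_iff[of "\<lambda>l. eps (Suc l)"] by simp
  have conv: "convergent (\<lambda>l. v (Suc l) $ i)" for i
    by (rule almost_inc_conv[where d = "\<lambda>l. K * eps (Suc (Suc l))" and C = "KI * KB"])
       (use stepv vbdd sum2 Kpos eps_pos in \<open>auto intro: summable_mult less_imp_le\<close>)
  then obtain L where L: "\<And>i. (\<lambda>l. v (Suc l) $ i) \<longlonglongrightarrow> L i"
    unfolding convergent_def by metis
  define u where "u = (\<chi> i. L i)"
  have vSu: "(\<lambda>l. v (Suc l)) \<longlonglongrightarrow> u"
    unfolding u_def by (rule vec_tendstoI) (simp add: L)
  then have vu: "v \<longlonglongrightarrow> u" using filterlim_sequentially_Suc by blast
  have vSSu: "(\<lambda>l. v (Suc (Suc l))) \<longlonglongrightarrow> u"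
    using vSu filterlim_sequentially_Suc[of "\<lambda>l. v (Suc l)"] by blast
  have n1: "(\<lambda>l. norm (v (Suc l) - u)) \<longlonglongrightarrow> 0"
  proof -
    have "(\<lambda>l. v (Suc l) - u) \<longlonglongrightarrow> u - u" by (intro tendsto_diff vSu tendsto_const)
    then have "(\<lambda>l. v (Suc l) - u) \<longlonglongrightarrow> 0" by (simp only: diff_self)
    from tendsto_norm_zero[OF this] show ?thesis .
  qed
  have n1': "(\<lambda>l. norm (u - v (Suc l))) \<longlonglongrightarrow> 0"
    using n1 by (simp add: norm_minus_commute)
  have n2: "(\<lambda>l. norm (v (Suc (Suc l)) - v (Suc l))) \<longlonglongrightarrow> 0"
  proof -
    have "(\<lambda>l. v (Suc (Suc l)) - v (Suc l)) \<longlonglongrightarrow> u - u" by (intro tendsto_diff vSSu vSu)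
    then have "(\<lambda>l. v (Suc (Suc l)) - v (Suc l)) \<longlonglongrightarrow> 0" by (simp only: diff_self)
    from tendsto_norm_zero[OF this] show ?thesis .
  qed
  have e0: "(\<lambda>l. eps (Suc (Suc l))) \<longlonglongrightarrow> 0" using summable_LIMSEQ_zero[OF sum2] .
  have Fu: "F u = 0"
  proof (subst vec_eq_iff, intro allI)
    fix i
    have lo: "- KA * norm (v (Suc l) - u) \<le> F u $ i" for l
      using lip[of "v (Suc l)" i u] sub[of l i] by simp
    have "(\<lambda>l. - KA * norm (v (Suc l) - u)) \<longlonglongrightarrow> - KA * 0"
      by (intro tendsto_mult tendsto_const n1)
    then have g1: "0 \<le> F u $ i"
      using tendsto_le[OF sequentially_bot tendsto_const, of _ 0 "F u $ i"] lo by simp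
    have up: "F u $ i \<le> KA * norm (v (Suc (Suc l)) - v (Suc l)) + eps (Suc (Suc l))
                + KA * norm (u - v (Suc l))" for l
    proof -
      let ?Q = "Pol (Suc (Suc l))"
      have "F (v (Suc l)) $ i \<le> (b ?Q - A ?Q *v v (Suc l)) $ i + eps (Suc (Suc l))"
        using Pol_eps[folded F_def, of "Suc l" i] by simp
      also have "(b ?Q - A ?Q *v v (Suc l)) $ i = (A ?Q *v (v (Suc (Suc l)) - v (Suc l))) $ i"
        using v_solve[of "Suc l"] by (simp add: matrix_vector_mult_diff_distrib)
      also have "\<dots> \<le> KA * norm (v (Suc (Suc l)) - v (Suc l))"
        using compA[OF PolPS] by (smt (verit))
      finally show ?thesis using lip[of u i "v (Suc l)"] by simp
    qed
    have "(\<lambda>l. KA * norm (v (Suc (Suc l)) - v (Suc l)) + eps (Suc (Suc l))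
                + KA * norm (u - v (Suc l))) \<longlonglongrightarrow> KA * 0 + 0 + KA * 0"
      by (intro tendsto_add tendsto_mult tendsto_const n2 e0 n1')
    then have g2: "F u $ i \<le> 0"
      using tendsto_le[OF sequentially_bot _ tendsto_const, of _ 0 "F u $ i"] up by simp
    from g1 g2 show "F u $ i = 0 $ i" by simp
  qed
  have cmp: "w $ j \<le> w' $ j" if hw': "\<And>i. F w' $ i \<le> 0" and hw: "\<And>i. F w $ i \<ge> 0" for w w' j
  proof (rule field_le_epsilon)
    fix e :: real assume e: "e > 0"
    define \<delta> where "\<delta> = e / K"
    have dpos: "\<delta> > 0" unfolding \<delta>_def using e Kpos by simp
    have "\<forall>i. \<exists>P\<in>PS. - \<delta> < (b P - A P *v w) $ i"
    proof
      fix i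
      have "- \<delta> < F w $ i" using hw[of i] dpos by linarith
      then show "\<exists>P\<in>PS. - \<delta> < (b P - A P *v w) $ i"
        unfolding F_def' using less_cSUP_iff[OF PS_ne bdd] by blast
    qed
    then obtain R where R: "\<And>i. R i \<in> PS" "\<And>i. - \<delta> < (b (R i) - A (R i) *v w) $ i"
      by metis
    define Q where "Q = (\<lambda>j. R j j)"
    have QPS: "Q \<in> PS" using R(1) unfolding Q_def PS_def by auto
    have rows: "A Q $ i = A (R i) $ i \<and> b Q $ i = b (R i) $ i" for i
    proof -
      have d: "\<forall>P\<in>PS. \<forall>Q\<in>PS. \<forall>i. P i = Q i \<longrightarrow> A P $ i = A Q $ i \<and> b P $ i = b Q $ i"
        using decoupled unfolding row_decoupled_def PS_def .
      have "Q i = R i i" unfolding Q_def by simp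
      then show ?thesis using d QPS R(1)[of i] by metis
    qed
    have rowv: "(A Q *v x) $ i = (A (R i) *v x) $ i" for x i
      by (simp add: matrix_vector_mul_component rows)
    have "(A Q *v (w' - w)) $ i \<ge> - \<delta>" for i
    proof -
      have "(b Q - A Q *v w') $ i \<le> 0" using upper[OF QPS, of w' i] hw'[of i] by simp
      moreover have "- \<delta> < (b Q - A Q *v w) $ i" using R(2)[of i] rows[of i] rowv[of w i] by simp
      ultimately show ?thesis by (simp add: matrix_vector_mult_diff_distrib)
    qed
    then have "(w' - w) $ j \<ge> - \<delta> * K" by (rule lowerA[OF QPS less_imp_le[OF dpos]])
    moreover have "\<delta> * K = e" unfolding \<delta>_def using Kpos by simp
    ultimately show "w $ j \<le> w' $ j + e" by simp
  qed
  have "\<forall>w. F w = 0 \<longleftrightarrow> w = u"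
  proof (intro allI iffI)
    fix w assume "F w = 0"
    then show "w = u" using cmp[of u w] cmp[of w u] Fu by (simp add: vec_eq_iff antisym)
  next
    fix w assume "w = u" then show "F w = 0" using Fu by simp
  qed
  then show ?thesis using vu unfolding F_def by blast
qed

end
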